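(* Let $(G,+,\bullet)$ be an interchange near ring. Then $(G,\bullet)$ is associative if and only if for every $x\in G$ the following three identities hold: (i) $(x\bullet 0)\bullet 0 = x\bullet 0$; (ii) $(0\bullet x)\bullet 0 = 0\bullet (x\bullet 0)$; (iii) $0\bullet(0\bullet x) = 0\bullet x$.
   Context: An interchange near ring is a triple $(G,+,\bullet)$ where $(G,+)$ is a group (written additively, not necessarily abelian, with identity $0$ and inverses $-x$) and $\bullet$ is a binary operation on $G$ satisfying the interchange law $(w+x)\bullet(y+z) = (w\bullet y)+(x\bullet z)$ for all $w,x,y,z\in G$. No other axioms are imposed on $\bullet$. *)

theory Defs
  imports Main
begin

text \<open>An interchange near ring: a group (G,+) (here the type class group_add, not
necessarily abelian) with a binary operation m satisfying the interchange law.\<close>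
definition interchange_near_ring :: "('a::group_add \<Rightarrow> 'a \<Rightarrow> 'a) \<Rightarrow> bool" where
  "interchange_near_ring m \<longleftrightarrow>
     (\<forall>w x y z. m (w + x) (y + z) = m w y + m x z)"

end

theory Submission
  imports Defs
begin

theorem lemma2p2:
  fixes m :: "'a::group_add \<Rightarrow> 'a \<Rightarrow> 'a"
  assumes "interchange_near_ring m"
  shows "(\<forall>x y z. m (m x y) z = m x (m y z)) \<longleftrightarrow>
         (\<forall>x. m (m x 0) 0 = m x 0 \<and> m (m 0 x) 0 = m 0 (m x 0) \<and> m 0 (m 0 x) = m 0 x)"
proof -
  have I: "\<And>w x y z. m (w + x) (y + z) = m w y + m x z"
    using assms unfolding interchange_near_ring_def by blast
  have m00: "m 0 0 = 0"
  proof -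
    have "m (0+0) (0+0) = m 0 0 + m 0 0" by (rule I)
    then have "m 0 0 + m 0 0 = m 0 0 + 0" by simp
    then show ?thesis by (rule add_left_imp_eq)
  qed
  have sp: "\<And>x y. m x y = m x 0 + m 0 y"
  proof -
    fix x y
    have "m (x+0) (0+y) = m x 0 + m 0 y" by (rule I)
    then show "m x y = m x 0 + m 0 y" by simp
  qed
  have fa: "\<And>a b. m (a+b) 0 = m a 0 + m b 0"
  proof -
    fix a b
    have "m (a+b) (0+0) = m a 0 + m b 0" by (rule I)
    then show "m (a+b) 0 = m a 0 + m b 0" by simp
  qed
  have ga: "\<And>a b. m 0 (a+b) = m 0 a + m 0 b"
  proof -
    fix a b
    have "m (0+0) (a+b) = m 0 a + m 0 b" by (rule I)
    then show "m 0 (a+b) = m 0 a + m 0 b" by simp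
  qed
  show ?thesis
  proof
    assume A: "\<forall>x y z. m (m x y) z = m x (m y z)"
    show "\<forall>x. m (m x 0) 0 = m x 0 \<and> m (m 0 x) 0 = m 0 (m x 0) \<and> m 0 (m 0 x) = m 0 x"
      using A m00 by metis
  next
    assume B: "\<forall>x. m (m x 0) 0 = m x 0 \<and> m (m 0 x) 0 = m 0 (m x 0) \<and> m 0 (m 0 x) = m 0 x"
    show "\<forall>x y z. m (m x y) z = m x (m y z)"
    proof (intro allI)
      fix x y z
      have "m (m x y) z = m (m x y) 0 + m 0 z" by (rule sp)
      also have "\<dots> = m (m x 0 + m 0 y) 0 + m 0 z" using sp[of x y] by simp
      also have "\<dots> = m (m x 0) 0 + m (m 0 y) 0 + m 0 z" by (simp add: fa)
      also have "\<dots> = m x 0 + m 0 (m y 0) + m 0 (m 0 z)" using B by simp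
      also have "\<dots> = m x 0 + (m 0 (m y 0) + m 0 (m 0 z))" by (simp add: add.assoc)
      also have "\<dots> = m x 0 + m 0 (m y 0 + m 0 z)" by (simp add: ga)
      also have "\<dots> = m x 0 + m 0 (m y z)" using sp[of y z] by simp
      also have "\<dots> = m x (m y z)" using sp[of x "m y z"] by simp
      finally show "m (m x y) z = m x (m y z)" .
    qed
  qed
qed

end
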